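(* On the open set $\Omega\subset\mathbb{R}^3$ where $u,v,w$ are pairwise distinct, consider the system $$u'=\frac{1}{u-w},\qquad v'=\frac{1}{v-w},\qquad w'=\frac1{w-u}+\frac1{w-v},$$ written $\mathbf{u}'=\mathbf{U}(\mathbf{u})$. Define $$P_{n1}(\mathbf{u})=\frac{2}{3(u-v)^2(v-w)(w-u)}\begin{pmatrix}0&1&-1\\-1&0&1\\1&-1&0\end{pmatrix},\qquad H_n(\mathbf{u})=\frac14(u+v-2w)(u-v)^3,$$ $$P_{n2}(\mathbf{u})=\frac16\frac{u-v}{(v-w)(w-u)}\begin{pmatrix}0&2&1\\-2&0&-1\\-1&1&0\end{pmatrix}+\frac12\Big[\frac1{w-u}-\frac1{v-w}\Big]\begin{pmatrix}0&0&-1\\0&0&-1\\1&1&0\end{pmatrix},$$ and $H^{(1)}(\mathbf{u})=u+v+w$. Then $P_{n1}$ and $P_{n2}$ are compatible Poisson matrices on $\Omega$ and $$\mathbf{u}'=P_{n1}(\mathbf{u})\nabla H_n(\mathbf{u})=P_{n2}(\mathbf{u})\nabla H^{(1)}(\mathbf{u}).$$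
   Context: A smooth skew-symmetric matrix-valued function $P$ on an open subset of $\mathbb{R}^3$ is a Poisson matrix if the bracket $\{f,g\}=(\nabla f)^{T}P\,\nabla g$ satisfies the Jacobi identity; two Poisson matrices are compatible if every linear combination of them is again a Poisson matrix. The system describes two bodies at $u,v$ that do not interact with each other but each interact with a third body at $w$. *)

theory Defs
  imports "HOL-Analysis.Analysis"
begin

type_synonym pt = "real ^ 3"
type_synonym mat3 = "real ^ 3 ^ 3"

definition partial :: "3 \<Rightarrow> (pt \<Rightarrow> real) \<Rightarrow> pt \<Rightarrow> real" where
  "partial i f x = frechet_derivative f (at x) (axis i 1)"

definition grad :: "(pt \<Rightarrow> real) \<Rightarrow> pt \<Rightarrow> pt" where
  "grad f x = (\<chi> i. partial i f x)"

fun Ck_on :: "nat \<Rightarrow> pt set \<Rightarrow> (pt \<Rightarrow> real) \<Rightarrow> bool" where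
  "Ck_on 0 S f = continuous_on S f"
| "Ck_on (Suc n) S f = (f differentiable_on S \<and> continuous_on S f \<and> (\<forall>i. Ck_on n S (partial i f)))"

definition smooth_on :: "pt set \<Rightarrow> (pt \<Rightarrow> real) \<Rightarrow> bool" where
  "smooth_on S f \<longleftrightarrow> (\<forall>n. Ck_on n S f)"

definition pbracket :: "(pt \<Rightarrow> mat3) \<Rightarrow> (pt \<Rightarrow> real) \<Rightarrow> (pt \<Rightarrow> real) \<Rightarrow> pt \<Rightarrow> real" where
  "pbracket P f g x = grad f x \<bullet> (P x *v grad g x)"

definition poisson_matrix :: "pt set \<Rightarrow> (pt \<Rightarrow> mat3) \<Rightarrow> bool" where
  "poisson_matrix S P \<longleftrightarrow>
     (\<forall>i j. smooth_on S (\<lambda>x. P x $ i $ j)) \<and>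
     (\<forall>x\<in>S. transpose (P x) = - P x) \<and>
     (\<forall>f g h. smooth_on S f \<and> smooth_on S g \<and> smooth_on S h \<longrightarrow>
        (\<forall>x\<in>S. pbracket P f (pbracket P g h) x + pbracket P g (pbracket P h f) x
               + pbracket P h (pbracket P f g) x = 0))"

definition compatible_poisson :: "pt set \<Rightarrow> (pt \<Rightarrow> mat3) \<Rightarrow> (pt \<Rightarrow> mat3) \<Rightarrow> bool" where
  "compatible_poisson S P Q \<longleftrightarrow> (\<forall>a b :: real. poisson_matrix S (\<lambda>x. a *\<^sub>R P x + b *\<^sub>R Q x))"

definition Omega :: "pt set" where
  "Omega = {x. x$1 \<noteq> x$2 \<and> x$2 \<noteq> x$3 \<and> x$3 \<noteq> x$1}"

definition Ufield :: "pt \<Rightarrow> pt" where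
  "Ufield x = (let u = x$1; v = x$2; w = x$3 in
     vector [1/(u-w), 1/(v-w), 1/(w-u) + 1/(w-v)])"

definition Pn1 :: "pt \<Rightarrow> mat3" where
  "Pn1 x = (let u = x$1; v = x$2; w = x$3 in
     (2 / (3 * (u-v)^2 * (v-w) * (w-u))) *\<^sub>R
       vector [vector [0, 1, -1], vector [-1, 0, 1], vector [1, -1, 0]])"

definition Hn :: "pt \<Rightarrow> real" where
  "Hn x = (let u = x$1; v = x$2; w = x$3 in (1/4) * (u + v - 2*w) * (u-v)^3)"

definition Pn2 :: "pt \<Rightarrow> mat3" where
  "Pn2 x = (let u = x$1; v = x$2; w = x$3 in
     ((1/6) * ((u-v) / ((v-w) * (w-u)))) *\<^sub>R
       vector [vector [0, 2, 1], vector [-2, 0, -1], vector [-1, 1, 0]]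
     + ((1/2) * (1/(w-u) - 1/(v-w))) *\<^sub>R
       vector [vector [0, 0, -1], vector [0, 0, -1], vector [1, 1, 0]])"

definition H1 :: "pt \<Rightarrow> real" where
  "H1 x = x$1 + x$2 + x$3"

end

theory Submission
  imports Defs
begin

lemma partial_at: "(f has_derivative f') (at x) \<Longrightarrow> partial l f x = f' (axis l 1)"
  unfolding partial_def using frechet_derivative_at by metis

lemma partial_cong_open:
  assumes "open S" "x \<in> S" "\<And>y. y \<in> S \<Longrightarrow> f y = g y"
  shows "partial l f x = partial l g x"
proof -
  have "(\<lambda>f'. (f has_derivative f') (at x)) = (\<lambda>f'. (g has_derivative f') (at x))"
    using has_derivative_transform_within_open[OF _ assms(1,2)] assms(3)
    by (metis (no_types, opaque_lifting))
  then show ?thesis unfolding partial_def frechet_derivative_def by simp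
qed

lemma partial_works: "f differentiable (at x) \<Longrightarrow> (f has_derivative (\<lambda>h. \<Sum>l\<in>UNIV. partial l f x * h $ l)) (at x)"
proof -
  assume "f differentiable (at x)"
  then have d: "(f has_derivative frechet_derivative f (at x)) (at x)" using frechet_derivative_works by blast
  then have lin: "linear (frechet_derivative f (at x))" using has_derivative_linear by blast
  have "frechet_derivative f (at x) h = (\<Sum>l\<in>UNIV. partial l f x * h $ l)" for h
  proof -
    have "h = (\<Sum>l\<in>UNIV. h $ l *\<^sub>R axis l 1)"
      by (simp add: vec_eq_iff axis_def sum.delta' if_distrib cong: if_cong)
    then have "frechet_derivative f (at x) h = frechet_derivative f (at x) (\<Sum>l\<in>UNIV. h $ l *\<^sub>R axis l 1)" by simp
    also have "\<dots> = (\<Sum>l\<in>UNIV. h $ l * frechet_derivative f (at x) (axis l 1))"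
      using lin by (simp add: linear_sum linear_scale)
    finally show ?thesis unfolding partial_def by (simp add: mult.commute)
  qed
  then show ?thesis using d by (metis (no_types, lifting) ext)
qed

lemma sum_axis[simp]: "(\<Sum>l\<in>UNIV. c l * axis i (1::real) $ l) = c i"
  by (simp add: axis_def if_distrib sum.delta cong: if_cong)

inductive rat_on :: "pt set \<Rightarrow> (pt \<Rightarrow> real) \<Rightarrow> bool" for S where
  rconst: "rat_on S (\<lambda>x. c)"
| rcoord: "rat_on S (\<lambda>x. x $ i)"
| radd: "rat_on S f \<Longrightarrow> rat_on S g \<Longrightarrow> rat_on S (\<lambda>x. f x + g x)"
| rmult: "rat_on S f \<Longrightarrow> rat_on S g \<Longrightarrow> rat_on S (\<lambda>x. f x * g x)"
| rinv: "rat_on S f \<Longrightarrow> (\<forall>x\<in>S. f x \<noteq> 0) \<Longrightarrow> rat_on S (\<lambda>x. inverse (f x))"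
| rcong: "rat_on S g \<Longrightarrow> (\<forall>x\<in>S. f x = g x) \<Longrightarrow> rat_on S f"

lemma rat_diff: "rat_on S f \<Longrightarrow> rat_on S g \<Longrightarrow> rat_on S (\<lambda>x. f x - g x)"
proof -
  assume a: "rat_on S f" "rat_on S g"
  have "rat_on S (\<lambda>x. f x + (-1) * g x)" by (intro radd rmult rconst a)
  then show ?thesis by (rule rcong) simp
qed

lemma rat_divide: "rat_on S f \<Longrightarrow> rat_on S g \<Longrightarrow> (\<forall>x\<in>S. g x \<noteq> 0) \<Longrightarrow> rat_on S (\<lambda>x. f x / g x)"
proof -
  assume a: "rat_on S f" "rat_on S g" "\<forall>x\<in>S. g x \<noteq> 0"
  have "rat_on S (\<lambda>x. f x * inverse (g x))" by (intro rmult rinv a)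
  then show ?thesis by (rule rcong) (simp add: divide_inverse)
qed

lemma rat_power: "rat_on S f \<Longrightarrow> rat_on S (\<lambda>x. f x ^ n)"
proof (induction n)
  case 0 then show ?case using rconst[of S 1] by simp
next
  case (Suc n)
  have "rat_on S (\<lambda>x. f x * f x ^ n)" by (intro rmult Suc)
  then show ?case by simp
qed

lemma rat_differentiable: "rat_on S f \<Longrightarrow> open S \<Longrightarrow> x \<in> S \<Longrightarrow> f differentiable (at x)"
proof (induction arbitrary: x rule: rat_on.induct)
  case (rconst c) then show ?case by simp
next
  case (rcoord i) then show ?case by (simp add: bounded_linear_imp_differentiable bounded_linear_vec_nth)
next
  case (radd f g) then show ?case by (simp add: differentiable_add)
next
  case (rmult f g) then show ?case by (simp add: differentiable_mult)
next
  case (rinv f) then show ?case by (simp add: differentiable_inverse)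
next
  case (rcong g f)
  then have "(g has_derivative frechet_derivative g (at x)) (at x)" using frechet_derivative_works by blast
  then have "(f has_derivative frechet_derivative g (at x)) (at x)"
    using has_derivative_transform_within_open[OF _ rcong(4,5)] rcong(2) by metis
  then show ?case unfolding differentiable_def by blast
qed

lemma rat_partial: "rat_on S f \<Longrightarrow> open S \<Longrightarrow> rat_on S (partial i f)"
proof (induction rule: rat_on.induct)
  case (rconst c)
  have "partial i (\<lambda>x. c) x = 0" for x by (subst partial_at[of _ "\<lambda>_. 0"]) auto
  then show ?case using rat_on.rconst[of S 0] by simp
next
  case (rcoord j)
  have "partial i (\<lambda>x. x $ j) x = axis i 1 $ j" for x
    by (rule partial_at) (simp add: bounded_linear_imp_has_derivative bounded_linear_vec_nth)
  then show ?case using rat_on.rconst[of S "axis i 1 $ j"] by simp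
next
  case (radd f g)
  have "partial i (\<lambda>x. f x + g x) x = partial i f x + partial i g x" if "x \<in> S" for x
    using partial_at[OF has_derivative_add[OF partial_works[OF rat_differentiable[OF radd(1,5) that]] partial_works[OF rat_differentiable[OF radd(2,5) that]]], of i]
    by simp
  then show ?case by (intro rcong[OF rat_on.radd[OF radd(3,4)[OF radd(5)]]]) auto
next
  case (rmult f g)
  have "partial i (\<lambda>x. f x * g x) x = f x * partial i g x + partial i f x * g x" if "x \<in> S" for x
    using partial_at[OF has_derivative_mult[OF partial_works[OF rat_differentiable[OF rmult(1,5) that]] partial_works[OF rat_differentiable[OF rmult(2,5) that]]], of i]
    by simp
  then show ?case
    by (intro rcong[OF rat_on.radd[OF rat_on.rmult[OF rmult(1) rmult(4)[OF rmult(5)]] rat_on.rmult[OF rmult(3)[OF rmult(5)] rmult(2)]]]) auto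
next
  case (rinv f)
  have "partial i (\<lambda>x. inverse (f x)) x = (-1) * (inverse (f x) * (inverse (f x) * partial i f x))" if "x \<in> S" for x
    using partial_at[OF Deriv.has_derivative_inverse[OF _ partial_works[OF rat_differentiable[OF rinv(1,4) that]]], of i] rinv(2) that
    by simp
  then show ?case
    by (intro rcong[OF rat_on.rmult[OF rat_on.rconst[of S "-1"] rat_on.rmult[OF rat_on.rinv[OF rinv(1,2)] rat_on.rmult[OF rat_on.rinv[OF rinv(1,2)] rinv(3)[OF rinv(4)]]]]]) auto
next
  case (rcong g f)
  have "partial i f x = partial i g x" if "x \<in> S" for x
    using partial_cong_open[OF rcong(4) that] rcong(2) by metis
  then show ?case by (intro rat_on.rcong[OF rcong(3)[OF rcong(4)]]) auto
qed

lemma rat_Ck: "rat_on S f \<Longrightarrow> open S \<Longrightarrow> Ck_on n S f"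
proof (induction n arbitrary: f)
  case 0
  then show ?case using rat_differentiable differentiable_imp_continuous_within
    by (simp add: continuous_at_imp_continuous_on differentiable_imp_continuous_within)
next
  case (Suc n)
  have d: "f differentiable (at x)" if "x \<in> S" for x using rat_differentiable Suc.prems that by blast
  then have "f differentiable_on S" by (simp add: differentiable_at_imp_differentiable_on)
  moreover have "continuous_on S f" using d by (simp add: continuous_at_imp_continuous_on differentiable_imp_continuous_within)
  ultimately show ?case using Suc rat_partial by simp
qed

lemma rat_smooth: "rat_on S f \<Longrightarrow> open S \<Longrightarrow> smooth_on S f"
  unfolding smooth_on_def using rat_Ck by blast

lemma dir_deriv:
  assumes "F differentiable (at (c + t *\<^sub>R axis k 1))"
  shows "((\<lambda>s. F (c + s *\<^sub>R axis k 1)) has_real_derivative partial k F (c + t *\<^sub>R axis k 1)) (at t)"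
proof -
  have l: "((\<lambda>s. c + s *\<^sub>R axis k (1::real)) has_derivative (\<lambda>s. s *\<^sub>R axis k 1)) (at t)"
    by (auto intro!: derivative_eq_intros)
  have "((\<lambda>s. F (c + s *\<^sub>R axis k 1)) has_derivative
     (\<lambda>s. \<Sum>l\<in>UNIV. partial l F (c + t *\<^sub>R axis k 1) * (s *\<^sub>R axis k 1) $ l)) (at t)"
    using has_derivative_compose[OF l partial_works[OF assms]] by simp
  moreover have "(\<lambda>s. \<Sum>l\<in>UNIV. partial l F (c + t *\<^sub>R axis k 1) * (s *\<^sub>R axis k (1::real)) $ l)
     = (\<lambda>s. partial k F (c + t *\<^sub>R axis k 1) * s)"
  proof
    fix s
    have "(\<Sum>l\<in>UNIV. partial l F (c + t *\<^sub>R axis k 1) * (s *\<^sub>R axis k (1::real)) $ l)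
        = (\<Sum>l\<in>UNIV. (s * partial l F (c + t *\<^sub>R axis k 1)) * axis k (1::real) $ l)"
      by (simp add: mult_ac)
    then show "(\<Sum>l\<in>UNIV. partial l F (c + t *\<^sub>R axis k 1) * (s *\<^sub>R axis k (1::real)) $ l)
     = partial k F (c + t *\<^sub>R axis k 1) * s" by simp
  qed
  ultimately show ?thesis unfolding has_field_derivative_def by simp
qed

lemma Ck2_unfold:
  assumes "Ck_on 2 S f" "open S" "y \<in> S"
  shows "f differentiable (at y)" "partial i f differentiable (at y)"
    "isCont (partial j (partial i f)) y"
proof -
  have c: "f differentiable_on S" "\<forall>i. partial i f differentiable_on S \<and> (\<forall>j. continuous_on S (partial j (partial i f)))"
    using assms(1) by (simp_all add: numeral_2_eq_2)
  show "f differentiable (at y)" using c(1) assms(2,3)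
    by (simp add: differentiable_on_eq_differentiable_at)
  show "partial i f differentiable (at y)" using c(2) assms(2,3)
    by (simp add: differentiable_on_eq_differentiable_at)
  show "isCont (partial j (partial i f)) y" using c(2) assms(2,3)
    by (simp add: continuous_on_eq_continuous_at)
qed

lemma schwarz:
  assumes S: "open S" "x \<in> S" and f: "Ck_on 2 S f"
  shows "partial i (partial j f) x = partial j (partial i f) x"
proof (rule ccontr)
  assume ne: "partial i (partial j f) x \<noteq> partial j (partial i f) x"
  define A where "A = partial j (partial i f) x"
  define B where "B = partial i (partial j f) x"
  define \<epsilon> where "\<epsilon> = \<bar>A - B\<bar> / 2"
  have \<epsilon>: "\<epsilon> > 0" using ne by (simp add: \<epsilon>_def A_def B_def)
  have "i \<noteq> j" using ne by auto
  obtain r where r: "r > 0" "ball x r \<subseteq> S" using S open_contains_ball by blast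
  obtain d1 where d1: "d1 > 0" "\<And>y. dist y x < d1 \<Longrightarrow> dist (partial j (partial i f) y) A < \<epsilon>"
  proof -
    have c: "continuous (at x) (partial j (partial i f))" using Ck2_unfold(3)[OF f S] .
    show ?thesis using c[unfolded continuous_at_eps_delta] \<epsilon> that unfolding A_def by meson
  qed
  obtain d2 where d2: "d2 > 0" "\<And>y. dist y x < d2 \<Longrightarrow> dist (partial i (partial j f) y) B < \<epsilon>"
  proof -
    have c: "continuous (at x) (partial i (partial j f))" using Ck2_unfold(3)[OF f S] .
    show ?thesis using c[unfolded continuous_at_eps_delta] \<epsilon> that unfolding B_def by meson
  qed
  define d where "d = min r (min d1 d2) / 4"
  have d: "d > 0" using r d1 d2 by (simp add: d_def)
  define ei where "ei = axis i (1::real)"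
  define ej where "ej = axis j (1::real)"
  define p where "p s t = x + s *\<^sub>R ei + t *\<^sub>R ej" for s t
  have pclose: "dist (p s t) x < min r (min d1 d2)" if "0 \<le> s" "s \<le> d" "0 \<le> t" "t \<le> d" for s t
  proof -
    have "dist (p s t) x = norm (s *\<^sub>R ei + t *\<^sub>R ej)" by (simp add: p_def dist_norm)
    also have "\<dots> \<le> norm (s *\<^sub>R ei) + norm (t *\<^sub>R ej)" by (rule norm_triangle_ineq)
    also have "\<dots> = s + t" using that by (simp add: ei_def ej_def)
    also have "\<dots> < min r (min d1 d2)" using that d by (simp add: d_def)
    finally show ?thesis .
  qed
  have pS: "p s t \<in> S" if "0 \<le> s" "s \<le> d" "0 \<le> t" "t \<le> d" for s t
    using pclose[OF that] r by (auto simp: dist_commute)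
  have fd: "f differentiable (at (p s t))" "partial k f differentiable (at (p s t))"
    if "0 \<le> s" "s \<le> d" "0 \<le> t" "t \<le> d" for s t k
    using Ck2_unfold[OF f S(1) pS[OF that]] by auto
  have pi: "p s t = (x + t *\<^sub>R ej) + s *\<^sub>R ei" for s t by (simp add: p_def algebra_simps)
  have pj: "p s t = (x + s *\<^sub>R ei) + t *\<^sub>R ej" for s t by (simp add: p_def algebra_simps)
  define \<Delta> where "\<Delta> = f (p d d) - f (p d 0) - f (p 0 d) + f (p 0 0)"
  obtain s1 t1 where st1: "0 < s1" "s1 < d" "0 < t1" "t1 < d"
     "\<Delta> = d * d * partial j (partial i f) (p s1 t1)"
  proof -
    define G where "G s = f (p s d) - f (p s 0)" for s
    have "\<forall>s. 0 \<le> s \<and> s \<le> d \<longrightarrow> DERIV G s :> (partial i f (p s d) - partial i f (p s 0))"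
    proof (intro allI impI)
      fix s assume s: "0 \<le> s \<and> s \<le> d"
      have a: "DERIV (\<lambda>s. f ((x + d *\<^sub>R ej) + s *\<^sub>R ei)) s :> partial i f ((x + d *\<^sub>R ej) + s *\<^sub>R ei)"
        unfolding ei_def by (rule dir_deriv) (use fd(1)[of s d] s d in \<open>simp add: pi ei_def\<close>)
      have b: "DERIV (\<lambda>s. f ((x + 0 *\<^sub>R ej) + s *\<^sub>R ei)) s :> partial i f ((x + 0 *\<^sub>R ej) + s *\<^sub>R ei)"
        unfolding ei_def by (rule dir_deriv) (use fd(1)[of s 0] s d in \<open>simp add: pi ei_def\<close>)
      show "DERIV G s :> (partial i f (p s d) - partial i f (p s 0))"
        unfolding G_def pi using DERIV_diff[OF a b] by simp
    qed
    from MVT2[OF d this[rule_format, OF conjI]] obtain s1 where s1: "0 < s1" "s1 < d"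
      "G d - G 0 = (d - 0) * (partial i f (p s1 d) - partial i f (p s1 0))" by blast
    define H where "H t = partial i f (p s1 t)" for t
    have "\<forall>t. 0 \<le> t \<and> t \<le> d \<longrightarrow> DERIV H t :> partial j (partial i f) (p s1 t)"
    proof (intro allI impI)
      fix t assume t: "0 \<le> t \<and> t \<le> d"
      show "DERIV H t :> partial j (partial i f) (p s1 t)"
        unfolding H_def pj ej_def by (rule dir_deriv) (use fd(2)[of s1 t i] t s1 in \<open>simp add: pj ej_def\<close>)
    qed
    from MVT2[OF d this[rule_format, OF conjI]] obtain t1 where t1: "0 < t1" "t1 < d"
      "H d - H 0 = (d - 0) * partial j (partial i f) (p s1 t1)" by blast
    have "\<Delta> = G d - G 0" by (simp add: \<Delta>_def G_def)
    also have "\<dots> = d * (H d - H 0)" using s1(3) by (simp add: H_def)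
    also have "\<dots> = d * d * partial j (partial i f) (p s1 t1)" using t1(3) by simp
    finally show ?thesis using that s1 t1 by blast
  qed
  obtain s2 t2 where st2: "0 < s2" "s2 < d" "0 < t2" "t2 < d"
     "\<Delta> = d * d * partial i (partial j f) (p s2 t2)"
  proof -
    define G where "G t = f (p d t) - f (p 0 t)" for t
    have "\<forall>t. 0 \<le> t \<and> t \<le> d \<longrightarrow> DERIV G t :> (partial j f (p d t) - partial j f (p 0 t))"
    proof (intro allI impI)
      fix t assume t: "0 \<le> t \<and> t \<le> d"
      have a: "DERIV (\<lambda>t. f ((x + d *\<^sub>R ei) + t *\<^sub>R ej)) t :> partial j f ((x + d *\<^sub>R ei) + t *\<^sub>R ej)"
        unfolding ej_def by (rule dir_deriv) (use fd(1)[of d t] t d in \<open>simp add: pj ej_def\<close>)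
      have b: "DERIV (\<lambda>t. f ((x + 0 *\<^sub>R ei) + t *\<^sub>R ej)) t :> partial j f ((x + 0 *\<^sub>R ei) + t *\<^sub>R ej)"
        unfolding ej_def by (rule dir_deriv) (use fd(1)[of 0 t] t d in \<open>simp add: pj ej_def\<close>)
      show "DERIV G t :> (partial j f (p d t) - partial j f (p 0 t))"
        unfolding G_def pj using DERIV_diff[OF a b] by simp
    qed
    from MVT2[OF d this[rule_format, OF conjI]] obtain t2 where t2: "0 < t2" "t2 < d"
      "G d - G 0 = (d - 0) * (partial j f (p d t2) - partial j f (p 0 t2))" by blast
    define H where "H s = partial j f (p s t2)" for s
    have "\<forall>s. 0 \<le> s \<and> s \<le> d \<longrightarrow> DERIV H s :> partial i (partial j f) (p s t2)"
    proof (intro allI impI)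
      fix s assume s: "0 \<le> s \<and> s \<le> d"
      show "DERIV H s :> partial i (partial j f) (p s t2)"
        unfolding H_def pi ei_def by (rule dir_deriv) (use fd(2)[of s t2 j] s t2 in \<open>simp add: pi ei_def\<close>)
    qed
    from MVT2[OF d this[rule_format, OF conjI]] obtain s2 where s2: "0 < s2" "s2 < d"
      "H d - H 0 = (d - 0) * partial i (partial j f) (p s2 t2)" by blast
    have "\<Delta> = G d - G 0" by (simp add: \<Delta>_def G_def)
    also have "\<dots> = d * (H d - H 0)" using t2(3) by (simp add: H_def)
    also have "\<dots> = d * d * partial i (partial j f) (p s2 t2)" using s2(3) by simp
    finally show ?thesis using that s2 t2 by blast
  qed
  have eq: "partial j (partial i f) (p s1 t1) = partial i (partial j f) (p s2 t2)"
    using st1(5) st2(5) d by simp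
  have "dist (partial j (partial i f) (p s1 t1)) A < \<epsilon>"
    using d1(2) pclose[of s1 t1] st1 by simp
  moreover have "dist (partial i (partial j f) (p s2 t2)) B < \<epsilon>"
    using d2(2) pclose[of s2 t2] st2 by simp
  ultimately have "\<bar>A - B\<bar> < 2 * \<epsilon>" using eq by (simp add: dist_real_def)
  then show False by (simp add: \<epsilon>_def)
qed

lemma pbracket_expand: "pbracket P g h x = (\<Sum>a\<in>UNIV. partial a g x * (\<Sum>b\<in>UNIV. P x$a$b * partial b h x))"
  by (simp add: pbracket_def grad_def inner_vec_def matrix_vector_mult_def)

lemma partial_pbracket:
  assumes dg: "\<And>a. partial a g differentiable (at x)" and dh: "\<And>b. partial b h differentiable (at x)"
    and dP: "\<And>a b. (\<lambda>y. P y$a$b) differentiable (at x)"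
  shows "partial l (pbracket P g h) x = (\<Sum>a\<in>UNIV. partial a g x * (\<Sum>b\<in>UNIV. P x$a$b * partial l (partial b h) x + partial l (\<lambda>y. P y$a$b) x * partial b h x) + partial l (partial a g) x * (\<Sum>b\<in>UNIV. P x$a$b * partial b h x))"
proof -
  have e: "pbracket P g h = (\<lambda>y. \<Sum>a\<in>UNIV. partial a g y * (\<Sum>b\<in>UNIV. P y$a$b * partial b h y))"
    by (rule ext) (rule pbracket_expand)
  have "((\<lambda>y. \<Sum>a\<in>UNIV. partial a g y * (\<Sum>b\<in>UNIV. P y$a$b * partial b h y)) has_derivative
     (\<lambda>v. \<Sum>a\<in>UNIV. partial a g x * (\<Sum>b\<in>UNIV. P x$a$b * (\<Sum>l\<in>UNIV. partial l (partial b h) x * v $ l) + (\<Sum>l\<in>UNIV. partial l (\<lambda>y. P y$a$b) x * v $ l) * partial b h x)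
        + (\<Sum>l\<in>UNIV. partial l (partial a g) x * v $ l) * (\<Sum>b\<in>UNIV. P x$a$b * partial b h x))) (at x)"
    by (intro has_derivative_sum has_derivative_mult partial_works dg dh dP)
  from partial_at[OF this, of l] show ?thesis unfolding e by simp
qed

lemma partial_neg: "f differentiable (at x) \<Longrightarrow> partial l (\<lambda>y. - f y) x = - partial l f x"
  using partial_at[OF has_derivative_minus[OF partial_works], of f x l] by simp

lemma jacobi_generic:
  assumes S: "open S" "x \<in> S"
    and dP: "\<And>a b. \<forall>y\<in>S. (\<lambda>y. P y$a$b) differentiable (at y)"
    and skew: "\<forall>y\<in>S. transpose (P y) = - P y"
    and cond: "(\<Sum>l\<in>UNIV. P x$1$l * partial l (\<lambda>y. P y$2$3) x + P x$2$l * partial l (\<lambda>y. P y$3$1) x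
                 + P x$3$l * partial l (\<lambda>y. P y$1$2) x) = 0"
    and f: "Ck_on 2 S f" and g: "Ck_on 2 S g" and h: "Ck_on 2 S h"
  shows "pbracket P f (pbracket P g h) x + pbracket P g (pbracket P h f) x + pbracket P h (pbracket P f g) x = 0"
proof -
  have dPx: "(\<lambda>y. P y$a$b) differentiable (at x)" for a b using dP S by blast
  have d2: "partial a k differentiable (at x)" if "Ck_on 2 S k" for a k
    using Ck2_unfold(2)[OF that S] .
  have sk: "P y $ b $ a = - P y $ a $ b" if "y \<in> S" for a b y
  proof -
    have "transpose (P y) $ a $ b = (- P y) $ a $ b" using skew that by simp
    then show ?thesis by (simp add: transpose_def)
  qed
  have dsk: "partial l (\<lambda>y. P y $ b $ a) x = - partial l (\<lambda>y. P y $ a $ b) x" for a b l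
  proof -
    have "partial l (\<lambda>y. P y $ b $ a) x = partial l (\<lambda>y. - P y $ a $ b) x"
      by (rule partial_cong_open[OF S]) (erule sk)
    also have "\<dots> = - partial l (\<lambda>y. P y $ a $ b) x" by (rule partial_neg[OF dPx])
    finally show ?thesis .
  qed
  have diag: "P x $ a $ a = 0" for a using sk[OF S(2), of a a] by simp
  have ddiag: "partial l (\<lambda>y. P y $ a $ a) x = 0" for a l using dsk[of l a a] by simp
  have sw: "partial 2 (partial 1 k) x = partial 1 (partial 2 k) x"
           "partial 3 (partial 1 k) x = partial 1 (partial 3 k) x"
           "partial 3 (partial 2 k) x = partial 2 (partial 3 k) x" if "Ck_on 2 S k" for k
    using schwarz[OF S that, where i=2 and j=1] schwarz[OF S that, where i=3 and j=1] schwarz[OF S that, where i=3 and j=2] by simp_all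
  have sks: "P x $ 2 $ 1 = - P x $ 1 $ 2" "P x $ 3 $ 1 = - P x $ 1 $ 3" "P x $ 3 $ 2 = - P x $ 2 $ 3"
    using sk[OF S(2), of 1 2] sk[OF S(2), of 1 3] sk[OF S(2), of 2 3] by simp_all
  have dsks: "partial l (\<lambda>y. P y $ 2 $ 1) x = - partial l (\<lambda>y. P y $ 1 $ 2) x"
     "partial l (\<lambda>y. P y $ 3 $ 1) x = - partial l (\<lambda>y. P y $ 1 $ 3) x"
     "partial l (\<lambda>y. P y $ 3 $ 2) x = - partial l (\<lambda>y. P y $ 2 $ 3) x" for l
    using dsk[of l 1 2] dsk[of l 1 3] dsk[of l 2 3] by simp_all
  have pp: "pbracket P k (pbracket P m n) x = (\<Sum>i\<in>UNIV. partial i k x * (\<Sum>j\<in>UNIV. P x$i$j *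
     (\<Sum>a\<in>UNIV. partial a m x * (\<Sum>b\<in>UNIV. P x$a$b * partial j (partial b n) x + partial j (\<lambda>y. P y$a$b) x * partial b n x) + partial j (partial a m) x * (\<Sum>b\<in>UNIV. P x$a$b * partial b n x))))"
    if "Ck_on 2 S m" "Ck_on 2 S n" for k m n
    unfolding pbracket_expand[of P k] partial_pbracket[OF d2[OF that(1)] d2[OF that(2)] dPx] ..
  have C: "P x$1$2 * partial 2 (\<lambda>y. P y$2$3) x + P x$1$3 * partial 3 (\<lambda>y. P y$2$3) x
      + P x$1$2 * partial 1 (\<lambda>y. P y$1$3) x - P x$2$3 * partial 3 (\<lambda>y. P y$1$3) x
      - P x$1$3 * partial 1 (\<lambda>y. P y$1$2) x - P x$2$3 * partial 2 (\<lambda>y. P y$1$2) x = 0"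
    using cond by (simp add: sum_3 diag ddiag sks dsks algebra_simps)
  show ?thesis
    unfolding pp[OF g h] pp[OF h f] pp[OF f g]
    apply (simp only: sum_3 diag ddiag sks dsks sw[OF f] sw[OF g] sw[OF h])
    using C by algebra
qed

definition phi :: "pt \<Rightarrow> real" where "phi x = 2 / (3 * (x$1-x$2)^2 * (x$2-x$3) * (x$3-x$1))"
definition alpha :: "pt \<Rightarrow> real" where "alpha x = (1/6) * ((x$1-x$2) / ((x$2-x$3) * (x$3-x$1)))"
definition beta :: "pt \<Rightarrow> real" where "beta x = (1/2) * (1/(x$3-x$1) - 1/(x$2-x$3))"
definition M1 :: mat3 where "M1 = vector [vector [0, 1, -1], vector [-1, 0, 1], vector [1, -1, 0]]"
definition M2 :: mat3 where "M2 = vector [vector [0, 2, 1], vector [-2, 0, -1], vector [-1, 1, 0]]"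
definition M3 :: mat3 where "M3 = vector [vector [0, 0, -1], vector [0, 0, -1], vector [1, 1, 0]]"

lemma Pn1_eq: "Pn1 x = phi x *\<^sub>R M1" by (simp add: Pn1_def phi_def M1_def Let_def)
lemma Pn2_eq: "Pn2 x = alpha x *\<^sub>R M2 + beta x *\<^sub>R M3" by (simp add: Pn2_def alpha_def beta_def M2_def M3_def Let_def)

lemma Omega_ne: "x \<in> Omega \<Longrightarrow> x$1 - x$2 \<noteq> 0 \<and> x$2 - x$3 \<noteq> 0 \<and> x$3 - x$1 \<noteq> 0"
  by (auto simp: Omega_def)

lemma open_Omega: "open Omega"
  unfolding Omega_def
  by (intro open_Collect_conj open_Collect_neq continuous_intros)

lemma rat_phi: "rat_on Omega phi"
  unfolding phi_def by (intro rat_divide rmult rat_power rat_diff rconst rcoord) (auto simp: Omega_def)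
lemma rat_alpha: "rat_on Omega alpha"
  unfolding alpha_def by (intro rat_divide rmult rat_power rat_diff rconst rcoord) (auto simp: Omega_def)
lemma rat_beta: "rat_on Omega beta"
  unfolding beta_def by (intro rat_divide rmult rat_power rat_diff rconst rcoord) (auto simp: Omega_def)

lemma partial_dir:
  assumes "F differentiable (at x)" "((\<lambda>s. F (x + s *\<^sub>R axis l 1)) has_real_derivative D) (at 0)"
  shows "partial l F x = D"
  using dir_deriv[of F x 0 l] assms DERIV_unique by fastforce

lemma comp_x:
  "(x + s *\<^sub>R axis 1 (1::real)) $ 1 = x$1 + s" "(x + s *\<^sub>R axis 1 (1::real)) $ 2 = x$2" "(x + s *\<^sub>R axis 1 (1::real)) $ 3 = x$3"
  "(x + s *\<^sub>R axis 2 (1::real)) $ 1 = x$1" "(x + s *\<^sub>R axis 2 (1::real)) $ 2 = x$2 + s" "(x + s *\<^sub>R axis 2 (1::real)) $ 3 = x$3"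
  "(x + s *\<^sub>R axis 3 (1::real)) $ 1 = x$1" "(x + s *\<^sub>R axis 3 (1::real)) $ 2 = x$2" "(x + s *\<^sub>R axis 3 (1::real)) $ 3 = x$3 + s"
  for x :: pt by (simp_all add: axis_def)

lemma dphi1: assumes x: "x \<in> Omega" shows "partial 1 phi x = phi x * (-2 * inverse(x$1-x$2) + inverse(x$3-x$1))"
proof -
  have n: "x$1 - x$2 \<noteq> 0" "x$2 - x$3 \<noteq> 0" "x$3 - x$1 \<noteq> 0" using Omega_ne[OF x] by auto
  have n': "x$1 \<noteq> x$2" "x$2 \<noteq> x$3" "x$3 \<noteq> x$1" "x$2 \<noteq> x$1" "x$3 \<noteq> x$2" "x$1 \<noteq> x$3" using n by auto
  show ?thesis
    apply (rule partial_dir[OF rat_differentiable[OF rat_phi open_Omega x]])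
    unfolding phi_def comp_x
    apply (rule derivative_eq_intros refl | simp add: n n')+
    apply (simp add: n n' inverse_eq_divide divide_simps power2_eq_square)
    apply (simp add: algebra_simps)?
    done
qed

lemma dphi2: assumes x: "x \<in> Omega" shows "partial 2 phi x = phi x * (2 * inverse(x$1-x$2) - inverse(x$2-x$3))"
proof -
  have n: "x$1 - x$2 \<noteq> 0" "x$2 - x$3 \<noteq> 0" "x$3 - x$1 \<noteq> 0" using Omega_ne[OF x] by auto
  have n': "x$1 \<noteq> x$2" "x$2 \<noteq> x$3" "x$3 \<noteq> x$1" "x$2 \<noteq> x$1" "x$3 \<noteq> x$2" "x$1 \<noteq> x$3" using n by auto
  show ?thesis
    apply (rule partial_dir[OF rat_differentiable[OF rat_phi open_Omega x]])
    unfolding phi_def comp_x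
    apply (rule derivative_eq_intros refl | simp add: n n')+
    apply (simp add: n n' inverse_eq_divide divide_simps power2_eq_square)
    apply (simp add: algebra_simps)?
    done
qed

lemma dphi3: assumes x: "x \<in> Omega" shows "partial 3 phi x = phi x * (inverse(x$2-x$3) - inverse(x$3-x$1))"
proof -
  have n: "x$1 - x$2 \<noteq> 0" "x$2 - x$3 \<noteq> 0" "x$3 - x$1 \<noteq> 0" using Omega_ne[OF x] by auto
  have n': "x$1 \<noteq> x$2" "x$2 \<noteq> x$3" "x$3 \<noteq> x$1" "x$2 \<noteq> x$1" "x$3 \<noteq> x$2" "x$1 \<noteq> x$3" using n by auto
  show ?thesis
    apply (rule partial_dir[OF rat_differentiable[OF rat_phi open_Omega x]])
    unfolding phi_def comp_x
    apply (rule derivative_eq_intros refl | simp add: n n')+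
    apply (simp add: n n' inverse_eq_divide divide_simps power2_eq_square)
    apply (simp add: algebra_simps)?
    done
qed

lemma dalpha1: assumes x: "x \<in> Omega" shows "partial 1 alpha x = alpha x * (inverse(x$1-x$2) + inverse(x$3-x$1))"
proof -
  have n: "x$1 - x$2 \<noteq> 0" "x$2 - x$3 \<noteq> 0" "x$3 - x$1 \<noteq> 0" using Omega_ne[OF x] by auto
  have n': "x$1 \<noteq> x$2" "x$2 \<noteq> x$3" "x$3 \<noteq> x$1" "x$2 \<noteq> x$1" "x$3 \<noteq> x$2" "x$1 \<noteq> x$3" using n by auto
  show ?thesis
    apply (rule partial_dir[OF rat_differentiable[OF rat_alpha open_Omega x]])
    unfolding alpha_def comp_x
    apply (rule derivative_eq_intros refl | simp add: n n')+
    apply (simp add: n n' inverse_eq_divide divide_simps power2_eq_square)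
    apply (simp add: algebra_simps)?
    done
qed

lemma dalpha2: assumes x: "x \<in> Omega" shows "partial 2 alpha x = alpha x * (- inverse(x$1-x$2) - inverse(x$2-x$3))"
proof -
  have n: "x$1 - x$2 \<noteq> 0" "x$2 - x$3 \<noteq> 0" "x$3 - x$1 \<noteq> 0" using Omega_ne[OF x] by auto
  have n': "x$1 \<noteq> x$2" "x$2 \<noteq> x$3" "x$3 \<noteq> x$1" "x$2 \<noteq> x$1" "x$3 \<noteq> x$2" "x$1 \<noteq> x$3" using n by auto
  show ?thesis
    apply (rule partial_dir[OF rat_differentiable[OF rat_alpha open_Omega x]])
    unfolding alpha_def comp_x
    apply (rule derivative_eq_intros refl | simp add: n n')+
    apply (simp add: n n' inverse_eq_divide divide_simps power2_eq_square)
    apply (simp add: algebra_simps)?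
    done
qed

lemma dalpha3: assumes x: "x \<in> Omega" shows "partial 3 alpha x = alpha x * (inverse(x$2-x$3) - inverse(x$3-x$1))"
proof -
  have n: "x$1 - x$2 \<noteq> 0" "x$2 - x$3 \<noteq> 0" "x$3 - x$1 \<noteq> 0" using Omega_ne[OF x] by auto
  have n': "x$1 \<noteq> x$2" "x$2 \<noteq> x$3" "x$3 \<noteq> x$1" "x$2 \<noteq> x$1" "x$3 \<noteq> x$2" "x$1 \<noteq> x$3" using n by auto
  show ?thesis
    apply (rule partial_dir[OF rat_differentiable[OF rat_alpha open_Omega x]])
    unfolding alpha_def comp_x
    apply (rule derivative_eq_intros refl | simp add: n n')+
    apply (simp add: n n' inverse_eq_divide divide_simps power2_eq_square)
    apply (simp add: algebra_simps)?
    done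
qed

lemma dbeta1: assumes x: "x \<in> Omega" shows "partial 1 beta x = inverse(x$3-x$1) * inverse(x$3-x$1) / 2"
proof -
  have n: "x$1 - x$2 \<noteq> 0" "x$2 - x$3 \<noteq> 0" "x$3 - x$1 \<noteq> 0" using Omega_ne[OF x] by auto
  have n': "x$1 \<noteq> x$2" "x$2 \<noteq> x$3" "x$3 \<noteq> x$1" "x$2 \<noteq> x$1" "x$3 \<noteq> x$2" "x$1 \<noteq> x$3" using n by auto
  show ?thesis
    apply (rule partial_dir[OF rat_differentiable[OF rat_beta open_Omega x]])
    unfolding beta_def comp_x
    apply (rule derivative_eq_intros refl | simp add: n n')+
    apply (simp add: n n' inverse_eq_divide divide_simps power2_eq_square)
    apply (simp add: algebra_simps)?
    done
qed

lemma dbeta2: assumes x: "x \<in> Omega" shows "partial 2 beta x = inverse(x$2-x$3) * inverse(x$2-x$3) / 2"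
proof -
  have n: "x$1 - x$2 \<noteq> 0" "x$2 - x$3 \<noteq> 0" "x$3 - x$1 \<noteq> 0" using Omega_ne[OF x] by auto
  have n': "x$1 \<noteq> x$2" "x$2 \<noteq> x$3" "x$3 \<noteq> x$1" "x$2 \<noteq> x$1" "x$3 \<noteq> x$2" "x$1 \<noteq> x$3" using n by auto
  show ?thesis
    apply (rule partial_dir[OF rat_differentiable[OF rat_beta open_Omega x]])
    unfolding beta_def comp_x
    apply (rule derivative_eq_intros refl | simp add: n n')+
    apply (simp add: n n' inverse_eq_divide divide_simps power2_eq_square)
    apply (simp add: algebra_simps)?
    done
qed

lemma dbeta3: assumes x: "x \<in> Omega" shows "partial 3 beta x = -(inverse(x$3-x$1) * inverse(x$3-x$1) + inverse(x$2-x$3) * inverse(x$2-x$3)) / 2"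
proof -
  have n: "x$1 - x$2 \<noteq> 0" "x$2 - x$3 \<noteq> 0" "x$3 - x$1 \<noteq> 0" using Omega_ne[OF x] by auto
  have n': "x$1 \<noteq> x$2" "x$2 \<noteq> x$3" "x$3 \<noteq> x$1" "x$2 \<noteq> x$1" "x$3 \<noteq> x$2" "x$1 \<noteq> x$3" using n by auto
  show ?thesis
    apply (rule partial_dir[OF rat_differentiable[OF rat_beta open_Omega x]])
    unfolding beta_def comp_x
    apply (rule derivative_eq_intros refl | simp add: n n')+
    apply (simp add: n n' inverse_eq_divide divide_simps power2_eq_square)
    apply (simp add: algebra_simps)?
    done
qed


lemma Q_entry: "(a *\<^sub>R Pn1 x + b *\<^sub>R Pn2 x) $ i $ j = a * (phi x * M1$i$j) + b * (alpha x * M2$i$j + beta x * M3$i$j)"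
  by (simp add: Pn1_eq Pn2_eq)

lemma rat_entry: "rat_on Omega (\<lambda>y. (a *\<^sub>R Pn1 y + b *\<^sub>R Pn2 y) $ i $ j)"
  apply (rule rcong[where g="\<lambda>y. a * (phi y * M1$i$j) + b * (alpha y * M2$i$j + beta y * M3$i$j)"])
   apply (intro radd rmult rconst rat_phi rat_alpha rat_beta)
  apply (simp add: Pn1_eq Pn2_eq)
  done

lemma partial_entry:
  assumes x: "x \<in> Omega"
  shows "partial l (\<lambda>y. (a *\<^sub>R Pn1 y + b *\<^sub>R Pn2 y) $ i $ j) x
    = a * (partial l phi x * M1$i$j) + b * (partial l alpha x * M2$i$j + partial l beta x * M3$i$j)"
proof -
  have e: "(\<lambda>y. (a *\<^sub>R Pn1 y + b *\<^sub>R Pn2 y) $ i $ j) = (\<lambda>y. a * (phi y * M1$i$j) + b * (alpha y * M2$i$j + beta y * M3$i$j))"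
    by (rule ext) (simp add: Pn1_eq Pn2_eq)
  have "((\<lambda>y. a * (phi y * M1$i$j) + b * (alpha y * M2$i$j + beta y * M3$i$j)) has_derivative
     (\<lambda>h. a * ((\<Sum>l\<in>UNIV. partial l phi x * h $ l) * M1$i$j) + b * ((\<Sum>l\<in>UNIV. partial l alpha x * h $ l) * M2$i$j + (\<Sum>l\<in>UNIV. partial l beta x * h $ l) * M3$i$j))) (at x)"
    by (intro has_derivative_add has_derivative_mult_right has_derivative_mult_left partial_works
        rat_differentiable[OF rat_phi open_Omega x] rat_differentiable[OF rat_alpha open_Omega x] rat_differentiable[OF rat_beta open_Omega x])
  from partial_at[OF this, of l] show ?thesis unfolding e by simp
qed

lemma cond_Q:
  assumes x: "x \<in> Omega"
  shows "(\<Sum>l\<in>UNIV. (a *\<^sub>R Pn1 x + b *\<^sub>R Pn2 x)$1$l * partial l (\<lambda>y. (a *\<^sub>R Pn1 y + b *\<^sub>R Pn2 y)$2$3) x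
     + (a *\<^sub>R Pn1 x + b *\<^sub>R Pn2 x)$2$l * partial l (\<lambda>y. (a *\<^sub>R Pn1 y + b *\<^sub>R Pn2 y)$3$1) x
     + (a *\<^sub>R Pn1 x + b *\<^sub>R Pn2 x)$3$l * partial l (\<lambda>y. (a *\<^sub>R Pn1 y + b *\<^sub>R Pn2 y)$1$2) x) = 0"
proof -
  have n: "x$1 - x$2 \<noteq> 0" "x$2 - x$3 \<noteq> 0" "x$3 - x$1 \<noteq> 0" using Omega_ne[OF x] by auto
  define iA where "iA = inverse (x$1-x$2)"
  define iB where "iB = inverse (x$2-x$3)"
  define iC where "iC = inverse (x$3-x$1)"
  have g: "6 * ((1/6) * (A / (B * C))) * inverse A = inverse B * inverse C" if "A \<noteq> 0" for A B C :: real
    using that by (simp add: field_simps)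
  have hq: "6 * alpha x * iA = iB * iC"
    unfolding alpha_def iA_def iB_def iC_def using g[OF n(1)] by simp
  have hb: "beta x = (1/2) * (iC - iB)"
    by (simp add: beta_def iB_def iC_def inverse_eq_divide)
  have e: "(\<Sum>l\<in>UNIV. (a *\<^sub>R Pn1 x + b *\<^sub>R Pn2 x)$1$l * partial l (\<lambda>y. (a *\<^sub>R Pn1 y + b *\<^sub>R Pn2 y)$2$3) x
     + (a *\<^sub>R Pn1 x + b *\<^sub>R Pn2 x)$2$l * partial l (\<lambda>y. (a *\<^sub>R Pn1 y + b *\<^sub>R Pn2 y)$3$1) x
     + (a *\<^sub>R Pn1 x + b *\<^sub>R Pn2 x)$3$l * partial l (\<lambda>y. (a *\<^sub>R Pn1 y + b *\<^sub>R Pn2 y)$1$2) x)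
     = 3 * a * b * phi x * (6 * alpha x * iA - iB * iC)"
    apply (simp only: sum_3 partial_entry[OF x])
    apply (simp only: Q_entry dphi1[OF x] dphi2[OF x] dphi3[OF x]
      dalpha1[OF x] dalpha2[OF x] dalpha3[OF x] dbeta1[OF x] dbeta2[OF x] dbeta3[OF x])
    apply (simp only: hb flip: iA_def iB_def iC_def)
    apply (simp add: M1_def M2_def M3_def)
    apply (simp add: field_simps)
    done
  show ?thesis unfolding e hq by simp
qed

lemma rat_Hn: "rat_on Omega Hn"
  unfolding Hn_def Let_def by (intro rat_divide rmult rat_power rat_diff radd rconst rcoord) auto

lemma rat_H1: "rat_on Omega H1"
  unfolding H1_def by (intro radd rcoord)

lemma dHn1: assumes x: "x \<in> Omega" shows "partial 1 Hn x = (1/4) * (x$1-x$2)^3 + (3/4) * (x$1+x$2-2*x$3) * (x$1-x$2)^2"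
  apply (rule partial_dir[OF rat_differentiable[OF rat_Hn open_Omega x]])
  unfolding Hn_def Let_def comp_x
  apply (rule derivative_eq_intros refl | simp)+
  apply (simp add: algebra_simps power2_eq_square power3_eq_cube)?
  done

lemma dHn2: assumes x: "x \<in> Omega" shows "partial 2 Hn x = (1/4) * (x$1-x$2)^3 - (3/4) * (x$1+x$2-2*x$3) * (x$1-x$2)^2"
  apply (rule partial_dir[OF rat_differentiable[OF rat_Hn open_Omega x]])
  unfolding Hn_def Let_def comp_x
  apply (rule derivative_eq_intros refl | simp)+
  apply (simp add: algebra_simps power2_eq_square power3_eq_cube)?
  done

lemma dHn3: assumes x: "x \<in> Omega" shows "partial 3 Hn x = -(1/2) * (x$1-x$2)^3"
  apply (rule partial_dir[OF rat_differentiable[OF rat_Hn open_Omega x]])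
  unfolding Hn_def Let_def comp_x
  apply (rule derivative_eq_intros refl | simp)+
  apply (simp add: algebra_simps power2_eq_square power3_eq_cube)?
  done

lemma dH1:
  assumes x: "x \<in> Omega"
  shows "partial l H1 x = 1"
proof -
  have "(H1 has_derivative (\<lambda>h. h$1 + h$2 + h$3)) (at x)"
    unfolding H1_def by (intro has_derivative_add bounded_linear_imp_has_derivative bounded_linear_vec_nth)
  from partial_at[OF this, of l] show ?thesis
    using exhaust_3[of l] by (auto simp: axis_def)
qed

lemma Ufield1:
  assumes x: "x \<in> Omega"
  shows "Ufield x = Pn1 x *v grad Hn x"
proof -
  have n: "x$1 - x$2 \<noteq> 0" "x$2 - x$3 \<noteq> 0" "x$3 - x$1 \<noteq> 0" using Omega_ne[OF x] by auto
  have n': "x$1 \<noteq> x$2" "x$2 \<noteq> x$3" "x$3 \<noteq> x$1" "x$2 \<noteq> x$1" "x$3 \<noteq> x$2" "x$1 \<noteq> x$3" using n by auto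
  show ?thesis
    apply (simp add: vec_eq_iff forall_3 matrix_vector_mult_def sum_3 grad_def dHn1[OF x] dHn2[OF x] dHn3[OF x] Pn1_eq M1_def Ufield_def Let_def phi_def)
    apply (simp add: n n' divide_simps power2_eq_square power3_eq_cube)
    apply (simp add: algebra_simps)?
    done
qed

lemma Ufield2:
  assumes x: "x \<in> Omega"
  shows "Ufield x = Pn2 x *v grad H1 x"
proof -
  have n: "x$1 - x$2 \<noteq> 0" "x$2 - x$3 \<noteq> 0" "x$3 - x$1 \<noteq> 0" using Omega_ne[OF x] by auto
  have n': "x$1 \<noteq> x$2" "x$2 \<noteq> x$3" "x$3 \<noteq> x$1" "x$2 \<noteq> x$1" "x$3 \<noteq> x$2" "x$1 \<noteq> x$3" using n by auto
  show ?thesis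
    apply (simp add: vec_eq_iff forall_3 matrix_vector_mult_def sum_3 grad_def dH1[OF x] Pn2_eq M2_def M3_def Ufield_def Let_def alpha_def beta_def)
    apply (simp add: n n' divide_simps)
    apply (simp add: algebra_simps)?
    done
qed

lemma compat_all: "poisson_matrix Omega (\<lambda>x. a *\<^sub>R Pn1 x + b *\<^sub>R Pn2 x)"
  unfolding poisson_matrix_def
proof (intro conjI allI ballI impI)
  fix i j show "smooth_on Omega (\<lambda>x. (a *\<^sub>R Pn1 x + b *\<^sub>R Pn2 x) $ i $ j)"
    by (rule rat_smooth[OF rat_entry open_Omega])
next
  fix x assume "x \<in> Omega"
  show "transpose (a *\<^sub>R Pn1 x + b *\<^sub>R Pn2 x) = - (a *\<^sub>R Pn1 x + b *\<^sub>R Pn2 x)"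
    by (simp add: vec_eq_iff forall_3 transpose_def Pn1_eq Pn2_eq M1_def M2_def M3_def algebra_simps)
next
  fix f g h x
  assume fgh: "smooth_on Omega f \<and> smooth_on Omega g \<and> smooth_on Omega h" and x: "x \<in> Omega"
  show "pbracket (\<lambda>x. a *\<^sub>R Pn1 x + b *\<^sub>R Pn2 x) f (pbracket (\<lambda>x. a *\<^sub>R Pn1 x + b *\<^sub>R Pn2 x) g h) x +
        pbracket (\<lambda>x. a *\<^sub>R Pn1 x + b *\<^sub>R Pn2 x) g (pbracket (\<lambda>x. a *\<^sub>R Pn1 x + b *\<^sub>R Pn2 x) h f) x +
        pbracket (\<lambda>x. a *\<^sub>R Pn1 x + b *\<^sub>R Pn2 x) h (pbracket (\<lambda>x. a *\<^sub>R Pn1 x + b *\<^sub>R Pn2 x) f g) x = 0"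
  proof (rule jacobi_generic[OF open_Omega x])
    show "\<forall>y\<in>Omega. (\<lambda>y. (a *\<^sub>R Pn1 y + b *\<^sub>R Pn2 y) $ i $ j) differentiable (at y)" for i j
      using rat_differentiable[OF rat_entry open_Omega] by blast
    show "\<forall>y\<in>Omega. transpose (a *\<^sub>R Pn1 y + b *\<^sub>R Pn2 y) = - (a *\<^sub>R Pn1 y + b *\<^sub>R Pn2 y)"
      by (simp add: vec_eq_iff forall_3 transpose_def Pn1_eq Pn2_eq M1_def M2_def M3_def algebra_simps)
    show "(\<Sum>l\<in>UNIV. (a *\<^sub>R Pn1 x + b *\<^sub>R Pn2 x)$1$l * partial l (\<lambda>y. (a *\<^sub>R Pn1 y + b *\<^sub>R Pn2 y)$2$3) x
     + (a *\<^sub>R Pn1 x + b *\<^sub>R Pn2 x)$2$l * partial l (\<lambda>y. (a *\<^sub>R Pn1 y + b *\<^sub>R Pn2 y)$3$1) x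
     + (a *\<^sub>R Pn1 x + b *\<^sub>R Pn2 x)$3$l * partial l (\<lambda>y. (a *\<^sub>R Pn1 y + b *\<^sub>R Pn2 y)$1$2) x) = 0"
      by (rule cond_Q[OF x])
    show "Ck_on 2 Omega f" "Ck_on 2 Omega g" "Ck_on 2 Omega h"
      using fgh unfolding smooth_on_def by auto
  qed
qed

theorem mainTheorem7:
  shows "open Omega \<and> poisson_matrix Omega Pn1 \<and> poisson_matrix Omega Pn2 \<and>
         compatible_poisson Omega Pn1 Pn2 \<and>
         (\<forall>x\<in>Omega. Ufield x = Pn1 x *v grad Hn x \<and> Ufield x = Pn2 x *v grad H1 x)"
proof (intro conjI ballI)
  show "open Omega" by (rule open_Omega)
  show "poisson_matrix Omega Pn1" using compat_all[of 1 0] by simp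
  show "poisson_matrix Omega Pn2" using compat_all[of 0 1] by simp
  show "compatible_poisson Omega Pn1 Pn2" unfolding compatible_poisson_def using compat_all by blast
  fix x assume x: "x \<in> Omega"
  show "Ufield x = Pn1 x *v grad Hn x" by (rule Ufield1[OF x])
  show "Ufield x = Pn2 x *v grad H1 x" by (rule Ufield2[OF x])
qed

end
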